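(* Let $G$ be a stitched 2-ichromatic ordered graph whose two parts (in its interval 2-coloring) have sizes $m$ and $n$. Then $R(G) \geq 4r+1$, where $r = \min(m,n)-1$.
   Context: An ordered graph is a graph together with a specified linear ordering of its vertex set. An ordered graph $G$ is contained in an ordered graph $H$ (a copy of $G$ in $H$) if there is an order-preserving injection $V(G)\to V(H)$ mapping edges to edges. An interval coloring of an ordered graph is a partition of its vertex set into independent sets each consisting of consecutive vertices (these sets are called parts); the interval chromatic number is the minimum number of parts in an interval coloring, and an ordered graph is $k$-ichromatic if its interval chromatic number is $k$. A $k$-ichromatic ordered graph is stitched if, for some interval coloring with $k$ parts, the set of size $2k$ consisting of the first and last vertex of each part lies in a single connected component of the graph (for stitched 2-ichromatic graphs the interval 2-coloring is unique). For $t\ge 1$, the $t$-color Ramsey number $R_t(G)$ of an ordered graph $G$ is the minimum $N$ such that every coloring of the edges of the ordered complete graph on $N$ vertices with $t$ colors contains a monochromatic copy of $G$ (as an ordered subgraph); $R(G)=R_2(G)$. *)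

theory Defs
  imports Main
begin

text \<open>An ordered graph on k vertices is represented with vertex set {0..<k}
  (ordered by the natural order) and a symmetric irreflexive edge relation E.\<close>

definition ograph :: "nat \<Rightarrow> (nat \<Rightarrow> nat \<Rightarrow> bool) \<Rightarrow> bool" where
  "ograph k E \<longleftrightarrow> (\<forall>u v. E u v \<longrightarrow> u < k \<and> v < k \<and> u \<noteq> v) \<and> (\<forall>u v. E u v \<longrightarrow> E v u)"

definition interval_coloring ::
  "nat \<Rightarrow> (nat \<Rightarrow> nat \<Rightarrow> bool) \<Rightarrow> (nat \<Rightarrow> nat) \<Rightarrow> nat \<Rightarrow> bool" where
  "interval_coloring k E a p \<longleftrightarrow> a 0 = 0 \<and> a p = k \<and> (\<forall>i<p. a i < a (Suc i)) \<and>
     (\<forall>i<p. \<forall>u v. a i \<le> u \<and> u < a (Suc i) \<and> a i \<le> v \<and> v < a (Suc i) \<longrightarrow> \<not> E u v)"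

definition interval_chromatic_number :: "nat \<Rightarrow> (nat \<Rightarrow> nat \<Rightarrow> bool) \<Rightarrow> nat" where
  "interval_chromatic_number k E = (LEAST p. \<exists>a. interval_coloring k E a p)"

definition stitched :: "nat \<Rightarrow> (nat \<Rightarrow> nat \<Rightarrow> bool) \<Rightarrow> bool" where
  "stitched k E \<longleftrightarrow> (\<exists>a. interval_coloring k E a (interval_chromatic_number k E) \<and>
     (let S = (\<Union>i<interval_chromatic_number k E. {a i, a (Suc i) - 1})
      in \<forall>x\<in>S. \<forall>y\<in>S. E\<^sup>*\<^sup>* x y))"

definition contains_copy ::
  "nat \<Rightarrow> (nat \<Rightarrow> nat \<Rightarrow> bool) \<Rightarrow> nat \<Rightarrow> (nat \<Rightarrow> nat \<Rightarrow> bool) \<Rightarrow> bool" where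
  "contains_copy k E N H \<longleftrightarrow> (\<exists>f. strict_mono_on {0..<k} f \<and> f ` {0..<k} \<subseteq> {0..<N} \<and>
     (\<forall>u v. E u v \<longrightarrow> H (f u) (f v)))"

text \<open>Every t-colouring of the edges {u,v} (u<v<N) of the ordered complete graph
  on N vertices (colour of {u,v} given by c u v) has a monochromatic copy.\<close>

definition ramsey_arrows :: "nat \<Rightarrow> nat \<Rightarrow> (nat \<Rightarrow> nat \<Rightarrow> bool) \<Rightarrow> nat \<Rightarrow> bool" where
  "ramsey_arrows t k E N \<longleftrightarrow>
     (\<forall>c :: nat \<Rightarrow> nat \<Rightarrow> nat. (\<forall>u v. u < v \<longrightarrow> v < N \<longrightarrow> c u v < t) \<longrightarrow>
       (\<exists>i<t. contains_copy k E N
          (\<lambda>x y. x \<noteq> y \<and> x < N \<and> y < N \<and> c (min x y) (max x y) = i)))"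

definition ordered_ramsey :: "nat \<Rightarrow> nat \<Rightarrow> (nat \<Rightarrow> nat \<Rightarrow> bool) \<Rightarrow> nat" where
  "ordered_ramsey t k E = (LEAST N. ramsey_arrows t k E N)"

end

theory Submission
  imports Defs "HOL-Library.Ramsey"
begin

lemma ramsey_exists:
  assumes og: "ograph k E"
  shows "\<exists>N. ramsey_arrows 2 k E N"
proof -
  obtain N :: nat where N: "partn_lst {..<N} [k,k] 2" using ramsey_full[of "[k,k]" 2] by blast
  have "ramsey_arrows 2 k E N"
    unfolding ramsey_arrows_def
  proof (intro allI impI)
    fix c :: "nat \<Rightarrow> nat \<Rightarrow> nat"
    assume c: "\<forall>u v. u < v \<longrightarrow> v < N \<longrightarrow> c u v < 2"
    define g where "g = (\<lambda>S::nat set. if c (Min S) (Max S) = 0 then 0 else (1::nat))"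
    have "g \<in> nsets {..<N} 2 \<rightarrow> {..<2}" by (auto simp: g_def)
    then obtain i H where i0: "i < length [k,k]" and H0: "H \<in> nsets {..<N} ([k,k]!i)" and mono: "g ` (nsets H 2) \<subseteq> {i}"
      using partn_lstE[OF N] by (metis length_Cons list.size(3) numeral_2_eq_2 One_nat_def)
    have i: "i < 2" using i0 by simp
    have H: "H \<in> nsets {..<N} k" using H0 i by (cases i) auto
    have fin: "finite H" and cardH: "card H = k" and Hsub: "H \<subseteq> {..<N}" using H by (auto simp: nsets_def)
    define L where "L = sorted_list_of_set H"
    have lenL: "length L = k" using cardH fin by (simp add: L_def)
    have ssL: "sorted_wrt (<) L" by (simp add: L_def)
    have setL: "set L = H" using fin by (simp add: L_def)
    define f where "f = (\<lambda>j. L ! j)"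
    have fH: "\<And>j. j < k \<Longrightarrow> f j \<in> H" using lenL setL by (auto simp: f_def)
    have smono: "strict_mono_on {0..<k} f"
      unfolding strict_mono_on_def f_def using ssL lenL by (auto simp: sorted_wrt_iff_nth_less)
    have img: "f ` {0..<k} \<subseteq> {0..<N}" using fH Hsub by fastforce
    show "\<exists>i<2. contains_copy k E N (\<lambda>x y. x \<noteq> y \<and> x < N \<and> y < N \<and> c (min x y) (max x y) = i)"
    proof (intro exI conjI)
      show "i < 2" by fact
      show "contains_copy k E N (\<lambda>x y. x \<noteq> y \<and> x < N \<and> y < N \<and> c (min x y) (max x y) = i)"
        unfolding contains_copy_def
      proof (intro exI[of _ f] conjI)
        show "strict_mono_on {0..<k} f" by fact
        show "f ` {0..<k} \<subseteq> {0..<N}" by fact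
        show "\<forall>u v. E u v \<longrightarrow> f u \<noteq> f v \<and> f u < N \<and> f v < N \<and> c (min (f u) (f v)) (max (f u) (f v)) = i"
        proof (intro allI impI)
        fix u v assume uv: "E u v"
        have u: "u < k" and v: "v < k" and neq: "u \<noteq> v" using og uv by (auto simp: ograph_def)
        have fneq: "f u \<noteq> f v"
        proof
          assume "f u = f v"
          then show False using smono u v neq unfolding strict_mono_on_def
            by (metis atLeastLessThan_iff less_irrefl linorder_neqE_nat zero_le)
        qed
        have fuH: "f u \<in> H" and fvH: "f v \<in> H" using fH u v by auto
        have in2: "{f u, f v} \<in> nsets H 2" using fuH fvH fneq by simp
        have gi: "g {f u, f v} = i" using mono in2 by blast
        have mm: "Min {f u, f v} = min (f u) (f v)" "Max {f u, f v} = max (f u) (f v)" by auto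
        have lt: "min (f u) (f v) < max (f u) (f v)" using fneq by auto
        have ltN: "max (f u) (f v) < N" using fuH fvH Hsub by auto
        have "c (min (f u) (f v)) (max (f u) (f v)) < 2" using c lt ltN by blast
        then have "c (min (f u) (f v)) (max (f u) (f v)) = i"
          using gi mm by (auto simp: g_def split: if_splits)
        then show "f u \<noteq> f v \<and> f u < N \<and> f v < N \<and> c (min (f u) (f v)) (max (f u) (f v)) = i"
          using fneq fuH fvH Hsub by auto
      qed
      qed
    qed
  qed
  then show ?thesis by blast
qed

lemma no_arrows:
  assumes og: "ograph k E" and ic: "interval_coloring k E a 2"
    and c1: "E\<^sup>*\<^sup>* 0 (a 1 - 1)" and c2: "E\<^sup>*\<^sup>* (a 1) (k - 1)"
    and N: "N \<le> 4 * (min (a 1 - a 0) (a 2 - a 1) - 1)"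
  shows "\<not> ramsey_arrows 2 k E N"
proof
  assume ra: "ramsey_arrows 2 k E N"
  have a0: "a 0 = 0" and a2: "a 2 = k" and lt: "\<forall>i<2. a i < a (Suc i)"
    using ic by (auto simp: interval_coloring_def)
  have a01: "a 0 < a 1" using lt by auto
  have a12: "a 1 < a 2" using lt[rule_format, of 1] by (simp add: numeral_2_eq_2)
  have indep: "\<And>u v. E u v \<Longrightarrow> (u < a 1) \<noteq> (v < a 1)"
  proof -
    fix u v assume uv: "E u v"
    have "u < k" "v < k" using og uv by (auto simp: ograph_def)
    moreover have "\<not> (u < a 1 \<and> v < a 1)"
      using ic uv a0 unfolding interval_coloring_def by (metis zero_le less_2_cases_iff One_nat_def)
    moreover have "\<not> (a 1 \<le> u \<and> a 1 \<le> v \<and> u < k \<and> v < k)"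
      using ic uv a2 unfolding interval_coloring_def
      by (metis One_nat_def Suc_1 lessI)
    ultimately show "(u < a 1) \<noteq> (v < a 1)" by auto
  qed
  define r where "r = min (a 1 - a 0) (a 2 - a 1) - 1"
  have N4: "N \<le> 4 * r" using N r_def by simp
  define c where "c = (\<lambda>u v::nat. if (u div r) mod 2 = (v div r) mod 2 then 0 else (1::nat))"
  have "\<forall>u v. u < v \<longrightarrow> v < N \<longrightarrow> c u v < 2" by (simp add: c_def)
  then obtain i f where i: "i < 2" and sm: "strict_mono_on {0..<k} f" and fim: "f ` {0..<k} \<subseteq> {0..<N}"
    and fe: "\<And>u v. E u v \<Longrightarrow> f u \<noteq> f v \<and> f u < N \<and> f v < N \<and> c (min (f u) (f v)) (max (f u) (f v)) = i"
    using ra unfolding ramsey_arrows_def contains_copy_def by blast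
  show False
  proof (cases "r = 0")
    case True
    then have "N = 0" using N4 by simp
    moreover have "0 < k" using a01 a12 a2 by simp
    then have "f 0 \<in> {0..<N}" using fim by (meson atLeastLessThan_iff image_subset_iff zero_le)
    ultimately show False by simp
  next
    case False
    define q where "q = (\<lambda>x::nat. (x div r) mod 2)"
    define h where "h = (\<lambda>x. (q (f x) + (if i = 1 \<and> x < a 1 then 1 else 0)) mod 2)"
    have step: "\<And>u v. E u v \<Longrightarrow> h u = h v"
    proof -
      fix u v assume uv: "E u v"
      have cc: "c (min (f u) (f v)) (max (f u) (f v)) = i" using fe[OF uv] by blast
      have ccc: "(if q (f u) = q (f v) then 0 else 1) = i"
        using cc unfolding c_def q_def by (cases "f u \<le> f v") (auto simp: min_def max_def)
      have "q (f u) = 0 \<or> q (f u) = 1" "q (f v) = 0 \<or> q (f v) = 1" by (auto simp: q_def)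
      then show "h u = h v" using ccc indep[OF uv] i unfolding h_def
        by (elim disjE) (auto split: if_splits)
    qed
    have inv: "\<And>x y. E\<^sup>*\<^sup>* x y \<Longrightarrow> h x = h y"
    proof -
      fix x y assume "E\<^sup>*\<^sup>* x y"
      then show "h x = h y" by (induction rule: rtranclp_induct) (auto dest: step)
    qed
    define p0 where "p0 = f 0"
    define p1 where "p1 = f (a 1 - 1)"
    define p2 where "p2 = f (a 1)"
    define p3 where "p3 = f (k - 1)"
    have q01: "q p0 = q p1"
      using inv[OF c1] a01 a0 unfolding h_def p0_def p1_def by (cases "i = 1") (simp_all add: q_def mod_Suc split: if_splits)
    have q23: "q p2 = q p3"
      using inv[OF c2] a12 a2 unfolding h_def p2_def p3_def by (cases "i = 1") (simp_all add: q_def)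
    have mono: "\<And>x y. x < k \<Longrightarrow> y < k \<Longrightarrow> x < y \<Longrightarrow> f x < f y"
      using sm unfolding strict_mono_on_def by auto
    have gap: "\<And>x y. x \<le> y \<Longrightarrow> y < k \<Longrightarrow> f x + (y - x) \<le> f y"
    proof -
      fix x y assume "x \<le> y" "y < k"
      then show "f x + (y - x) \<le> f y"
      proof (induction y rule: dec_induct)
        case base then show ?case by simp
      next
        case (step y)
        then have "f y < f (Suc y)" using mono by simp
        then show ?case using step by simp
      qed
    qed
    have r1: "r \<le> a 1 - 1" and r2: "r \<le> k - 1 - a 1" using a0 a2 r_def by auto
    have g01: "p0 + r \<le> p1" using gap[of 0 "a 1 - 1"] a01 a0 a12 a2 r1 unfolding p0_def p1_def by (simp; linarith)
    have g23: "p2 + r \<le> p3" using gap[of "a 1" "k - 1"] a12 a2 r2 unfolding p2_def p3_def by (simp; linarith)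
    have g12: "p1 < p2" using mono[of "a 1 - 1" "a 1"] a01 a0 a12 a2 unfolding p1_def p2_def by simp
    have "k - 1 \<in> {0..<k}" using a12 a2 by auto
    then have "f (k - 1) \<in> f ` {0..<k}" by (rule imageI)
    then have "f (k - 1) \<in> {0..<N}" using fim by (rule subsetD[rotated])
    then have p3N: "p3 < N" unfolding p3_def by simp
    have rpos: "r > 0" using False by simp
    define d0 where "d0 = p0 div r"
    define d1 where "d1 = p1 div r"
    define d2 where "d2 = p2 div r"
    define d3 where "d3 = p3 div r"
    have "(p0 + r) div r \<le> p1 div r" using g01 by (rule div_le_mono)
    then have e1: "d0 + 1 \<le> d1" unfolding d0_def d1_def using rpos by simp
    have "(p2 + r) div r \<le> p3 div r" using g23 by (rule div_le_mono)
    then have e2: "d2 + 1 \<le> d3" unfolding d2_def d3_def using rpos by simp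
    have e3: "d1 \<le> d2" unfolding d1_def d2_def using g12 by (simp add: div_le_mono)
    have e4: "d3 < 4" unfolding d3_def using p3N N4 rpos
      by (simp add: div_less_iff_less_mult)
    have e5: "d0 mod 2 = d1 mod 2" using q01 unfolding q_def d0_def d1_def .
    have e6: "d2 mod 2 = d3 mod 2" using q23 unfolding q_def d2_def d3_def .
    have f1: "d0 + 2 \<le> d1"
    proof (rule ccontr)
      assume "\<not> d0 + 2 \<le> d1"
      then have "d1 = Suc d0" using e1 by simp
      then show False using e5 by (simp add: mod_Suc split: if_splits)
    qed
    have f2: "d2 + 2 \<le> d3"
    proof (rule ccontr)
      assume "\<not> d2 + 2 \<le> d3"
      then have "d3 = Suc d2" using e2 by simp
      then show False using e6 by (simp add: mod_Suc split: if_splits)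
    qed
    from f1 f2 e3 e4 show False by simp
  qed
qed

lemma cross:
  assumes og: "ograph k E" and ic: "interval_coloring k E a 2" and uv: "E u v"
  shows "(u < a 1) \<noteq> (v < a 1)"
proof -
  have a0: "a 0 = 0" and a2: "a 2 = k"
    using ic by (auto simp: interval_coloring_def)
  have "u < k" "v < k" using og uv by (auto simp: ograph_def)
  moreover have "\<not> (u < a 1 \<and> v < a 1)"
    using ic uv a0 unfolding interval_coloring_def by (metis zero_le less_2_cases_iff One_nat_def)
  moreover have "\<not> (a 1 \<le> u \<and> a 1 \<le> v \<and> u < k \<and> v < k)"
    using ic uv a2 unfolding interval_coloring_def
    by (metis One_nat_def Suc_1 lessI)
  ultimately show ?thesis by auto
qed

theorem theorem1:
  fixes k :: nat and E :: "nat \<Rightarrow> nat \<Rightarrow> bool" and a :: "nat \<Rightarrow> nat"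
  assumes "ograph k E"
    and "interval_chromatic_number k E = 2"
    and "stitched k E"
    and "interval_coloring k E a 2"
  shows "ordered_ramsey 2 k E \<ge> 4 * (min (a 1 - a 0) (a 2 - a 1) - 1) + 1"
proof -
  note og = assms(1) and ic = assms(4)
  obtain b where ib: "interval_coloring k E b 2" and
    S: "\<forall>x\<in>(\<Union>i<2. {b i, b (Suc i) - 1}). \<forall>y\<in>(\<Union>i<2. {b i, b (Suc i) - 1}). E\<^sup>*\<^sup>* x y"
    using assms(3) assms(2) unfolding stitched_def Let_def by auto
  have mem: "b 0 \<in> (\<Union>i<2. {b i, b (Suc i) - 1})" "b 1 - 1 \<in> (\<Union>i<2. {b i, b (Suc i) - 1})"
    "b 1 \<in> (\<Union>i<2. {b i, b (Suc i) - 1})" "b 2 - 1 \<in> (\<Union>i<2. {b i, b (Suc i) - 1})"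
    by (force simp: numeral_2_eq_2)+
  have b0: "b 0 = 0" and b2: "b 2 = k" and ltb: "\<forall>i<2. b i < b (Suc i)"
    using ib by (auto simp: interval_coloring_def)
  have b01: "0 < b 1" using ltb[rule_format, of 0] b0 by simp
  have a0: "a 0 = 0" and a2: "a 2 = k" and lta: "\<forall>i<2. a i < a (Suc i)"
    using ic by (auto simp: interval_coloring_def)
  have a01: "0 < a 1" using lta[rule_format, of 0] a0 by simp
  define g where "g = (\<lambda>x::nat. (x < a 1) = (x < b 1))"
  have ginv: "\<And>x y. E\<^sup>*\<^sup>* x y \<Longrightarrow> g x = g y"
  proof -
    fix x y assume "E\<^sup>*\<^sup>* x y"
    then show "g x = g y"
    proof (induction rule: rtranclp_induct)
      case base then show ?case by simp
    next
      case (step y z)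
      have "(y < a 1) \<noteq> (z < a 1)" using cross[OF og ic step(2)] .
      moreover have "(y < b 1) \<noteq> (z < b 1)" using cross[OF og ib step(2)] .
      ultimately show ?case using step(3) unfolding g_def by auto
    qed
  qed
  have g0: "g 0" unfolding g_def using a01 b01 by simp
  have ba: "b 1 = a 1"
  proof (rule ccontr)
    assume ne: "b 1 \<noteq> a 1"
    show False
    proof (cases "b 1 < a 1")
      case True
      have "g (b 1)" using ginv[OF S[rule_format, OF mem(1) mem(3)]] g0 b0 by simp
      then show False using True unfolding g_def by simp
    next
      case False
      then have "a 1 < b 1" using ne by simp
      have "g (b 1 - 1)" using ginv[OF S[rule_format, OF mem(1) mem(2)]] g0 b0 by simp
      then show False using \<open>a 1 < b 1\<close> unfolding g_def by simp
    qed
  qed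
  have c1: "E\<^sup>*\<^sup>* 0 (a 1 - 1)" using S[rule_format, OF mem(1) mem(2)] b0 ba by simp
  have c2: "E\<^sup>*\<^sup>* (a 1) (k - 1)" using S[rule_format, OF mem(3) mem(4)] b2 ba by simp
  obtain N0 where N0: "ramsey_arrows 2 k E N0" using ramsey_exists[OF og] by blast
  define L where "L = ordered_ramsey 2 k E"
  have L: "ramsey_arrows 2 k E L" unfolding L_def ordered_ramsey_def using N0 by (rule LeastI)
  show ?thesis
  proof (rule ccontr)
    assume "\<not> ?thesis"
    then have "L \<le> 4 * (min (a 1 - a 0) (a 2 - a 1) - 1)" unfolding L_def by simp
    then show False using no_arrows[OF og ic c1 c2] L by blast
  qed
qed

end
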